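(* Let $\mathcal{I}=(G,V^\infty,T,k)$ be an instance of \textsc{OddMultiwayNodeCut} with $G$ a DAG, and let $Z\subseteq V(G)\setminus T$. Let $(G',V'^\infty):=\mathrm{torso}(G,V^\infty,Z)$ and $\mathcal{I}':=(G',V'^\infty,T,k)$. Then $\mathcal{I}$ admits a solution of size at most $k$ that is disjoint from $Z$ if and only if $\mathcal{I}'$ admits a solution of size at most $k$.
   Context: Paths are simple directed paths; a path is odd if it has an odd number of edges. An instance $(G,V^\infty,T,k)$ of \textsc{OddMultiwayNodeCut} consists of a DAG $G$, protected nodes $V^\infty\subseteq V(G)$, terminals $T\subseteq V^\infty$ and $k\in\mathbb{Z}_+$. A $T$-path is a path with both end nodes in $T$. A solution is a set $M\subseteq V(G)\setminus V^\infty$ intersecting every odd $T$-path. Parity-preserving torso. Given a DAG $G$ and $Z,V^\infty\subseteq V(G)$, first form $G_0$ from $G\setminus Z$ by adding an edge $u\rightarrow v$ for every pair of distinct $u,v\in V(G)\setminus Z$ such that $G$ has an odd $u\rightarrow v$ path with all internal nodes in $Z$. Then, for every pair of distinct $u,v\in V(G)\setminus Z$ such that $G$ has an even $u\rightarrow v$ path with all internal nodes in $Z$, add a new node $x_{uv}$ and edges $u\rightarrow x_{uv}$, $x_{uv}\rightarrow v$. The result is $G'$. Set $V'^\infty:=(V^\infty\setminus Z)\cup\{\text{new nodes }x_{uv}\}$, and $\mathrm{torso}(G,V^\infty,Z):=(G',V'^\infty)$. *)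

theory Defs
  imports Main
begin

definition dag :: "'a set \<Rightarrow> ('a \<times> 'a) set \<Rightarrow> bool" where
  "dag V E \<longleftrightarrow> finite V \<and> E \<subseteq> V \<times> V \<and> acyclic E"

definition is_path :: "'a set \<Rightarrow> ('a \<times> 'a) set \<Rightarrow> 'a list \<Rightarrow> bool" where
  "is_path V E p \<longleftrightarrow> p \<noteq> [] \<and> distinct p \<and> set p \<subseteq> V \<and>
     (\<forall>i. Suc i < length p \<longrightarrow> (p ! i, p ! Suc i) \<in> E)"

definition path_len :: "'a list \<Rightarrow> nat" where
  "path_len p = length p - 1"

definition odd_T_path :: "'a set \<Rightarrow> ('a \<times> 'a) set \<Rightarrow> 'a set \<Rightarrow> 'a list \<Rightarrow> bool" where
  "odd_T_path V E T p \<longleftrightarrow> is_path V E p \<and> odd (path_len p) \<and> hd p \<in> T \<and> last p \<in> T"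

text \<open>A solution of OddMultiwayNodeCut: a set of unprotected nodes meeting every odd T-path.\<close>

definition omnc_solution :: "'a set \<Rightarrow> ('a \<times> 'a) set \<Rightarrow> 'a set \<Rightarrow> 'a set \<Rightarrow> 'a set \<Rightarrow> bool" where
  "omnc_solution V E Vinf T M \<longleftrightarrow> M \<subseteq> V - Vinf \<and>
     (\<forall>p. odd_T_path V E T p \<longrightarrow> set p \<inter> M \<noteq> {})"

definition Z_path :: "'a set \<Rightarrow> ('a \<times> 'a) set \<Rightarrow> 'a set \<Rightarrow> bool \<Rightarrow> 'a \<Rightarrow> 'a \<Rightarrow> bool" where
  "Z_path V E Z b u v \<longleftrightarrow> (\<exists>p. is_path V E p \<and> hd p = u \<and> last p = v \<and>
       set (butlast (tl p)) \<subseteq> Z \<and> odd (path_len p) = b)"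

text \<open>Parity-preserving torso. Old nodes are tagged Inl, new nodes x_uv are Inr (u,v).\<close>

definition torso_new :: "'a set \<Rightarrow> ('a \<times> 'a) set \<Rightarrow> 'a set \<Rightarrow> ('a \<times> 'a) set" where
  "torso_new V E Z = {(u, v). u \<in> V - Z \<and> v \<in> V - Z \<and> u \<noteq> v \<and> Z_path V E Z False u v}"

definition torso_V :: "'a set \<Rightarrow> ('a \<times> 'a) set \<Rightarrow> 'a set \<Rightarrow> ('a + 'a \<times> 'a) set" where
  "torso_V V E Z = Inl ` (V - Z) \<union> Inr ` torso_new V E Z"

definition torso_E :: "'a set \<Rightarrow> ('a \<times> 'a) set \<Rightarrow> 'a set \<Rightarrow> (('a + 'a \<times> 'a) \<times> ('a + 'a \<times> 'a)) set" where
  "torso_E V E Z =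
     {(Inl u, Inl v) | u v. (u, v) \<in> E \<and> u \<notin> Z \<and> v \<notin> Z}
   \<union> {(Inl u, Inl v) | u v. u \<in> V - Z \<and> v \<in> V - Z \<and> u \<noteq> v \<and> Z_path V E Z True u v}
   \<union> {(Inl u, Inr (u, v)) | u v. (u, v) \<in> torso_new V E Z}
   \<union> {(Inr (u, v), Inl v) | u v. (u, v) \<in> torso_new V E Z}"

definition torso_Vinf :: "'a set \<Rightarrow> ('a \<times> 'a) set \<Rightarrow> 'a set \<Rightarrow> 'a set \<Rightarrow> ('a + 'a \<times> 'a) set" where
  "torso_Vinf V E Vinf Z = Inl ` (Vinf - Z) \<union> Inr ` torso_new V E Z"

end

theory Submission
  imports Defs
begin

lemma is_path_succ: "is_path V E p \<longleftrightarrow> p \<noteq> [] \<and> distinct p \<and> set p \<subseteq> V \<and> successively (\<lambda>x y. (x,y)\<in>E) p"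
  unfolding is_path_def successively_conv_nth by blast

lemma acyclic_distinct:
  assumes "acyclic E" "successively (\<lambda>x y. (x,y)\<in>E) q" shows "distinct q"
proof -
  have "successively (\<lambda>x y. (x,y)\<in>E\<^sup>+) q" using assms(2) by (rule successively_mono) auto
  hence "sorted_wrt (\<lambda>x y. (x,y)\<in>E\<^sup>+) q"
    by (subst (asm) successively_conv_sorted_wrt) (auto intro: transpI trancl_trans)
  thus ?thesis using assms(1) unfolding acyclic_def by (induction q) auto
qed

lemma set_ends: "r \<noteq> [] \<Longrightarrow> set r \<subseteq> {hd r, last r} \<union> set (butlast (tl r))"
proof (cases r)
  case (Cons a t) assume "r \<noteq> []"
  show ?thesis
  proof (cases t rule: rev_cases)
    case (snoc ys y) thus ?thesis using Cons by auto
  qed (use Cons in auto)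
qed simp

lemma edge_odd:
  assumes "(Inl a, Inl c) \<in> torso_E V E Z"
  shows "\<exists>r. r \<noteq> [] \<and> successively (\<lambda>x y. (x,y)\<in>E) r \<and> hd r = a \<and> last r = c \<and> set r \<subseteq> {a,c} \<union> Z \<and> even (length r)"
proof -
  have "(a,c) \<in> E \<or> Z_path V E Z True a c" using assms unfolding torso_E_def by auto
  thus ?thesis
  proof
    assume "(a,c) \<in> E" thus ?thesis by (intro exI[of _ "[a,c]"]) auto
  next
    assume "Z_path V E Z True a c"
    then obtain r where r: "is_path V E r" "hd r = a" "last r = c" "set (butlast (tl r)) \<subseteq> Z" "odd (path_len r)"
      unfolding Z_path_def by auto
    have "r \<noteq> []" using r(1) by (simp add: is_path_def)
    hence "even (length r)" using r(5) unfolding path_len_def by (cases r) auto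
    thus ?thesis using r set_ends[of r] \<open>r\<noteq>[]\<close> unfolding is_path_succ by (intro exI[of _ r]) auto
  qed
qed

lemma new_even:
  assumes "(a,c) \<in> torso_new V E Z"
  shows "\<exists>r. r \<noteq> [] \<and> successively (\<lambda>x y. (x,y)\<in>E) r \<and> hd r = a \<and> last r = c \<and> set r \<subseteq> {a,c} \<union> Z \<and> odd (length r)"
proof -
  obtain r where r: "is_path V E r" "hd r = a" "last r = c" "set (butlast (tl r)) \<subseteq> Z" "\<not> odd (path_len r)"
      using assms unfolding Z_path_def torso_new_def by auto
    have "r \<noteq> []" using r(1) by (simp add: is_path_def)
    hence "odd (length r)" using r(5) unfolding path_len_def by (cases r) auto
    thus ?thesis using r set_ends[of r] \<open>r\<noteq>[]\<close> unfolding is_path_succ by (intro exI[of _ r]) auto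
qed

lemma glue:
  assumes "r \<noteq> []" "q \<noteq> []" "successively P r" "successively P q" "last r = hd q"
  shows "successively P (r @ tl q)" "last (r @ tl q) = last q" "set (r @ tl q) \<subseteq> set r \<union> set q"
        "length (r @ tl q) + 1 = length r + length q"
proof -
  obtain c t where q: "q = c # t" using assms(2) by (cases q) auto
  show "successively P (r @ tl q)" using assms q
    by (cases t) (auto simp: successively_append_iff)
  show "last (r @ tl q) = last q" using assms q by (cases t) auto
  show "set (r @ tl q) \<subseteq> set r \<union> set q" using q by auto
  show "length (r @ tl q) + 1 = length r + length q" using q by auto
qed

lemma expand:
  "successively (\<lambda>x y. (x,y) \<in> torso_E V E Z) p' \<Longrightarrow> p' \<noteq> [] \<Longrightarrow> hd p' = Inl a \<Longrightarrow> last p' = Inl b \<Longrightarrow>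
   \<exists>q. q \<noteq> [] \<and> successively (\<lambda>x y. (x,y)\<in>E) q \<and> hd q = a \<and> last q = b \<and>
       set q \<subseteq> {x. Inl x \<in> set p'} \<union> Z \<and> (even (length q) \<longleftrightarrow> even (length p'))"
proof (induction "length p'" arbitrary: p' a rule: less_induct)
  case less
  obtain rest where p': "p' = Inl a # rest" using less.prems by (cases p') auto
  show ?case
  proof (cases rest)
    case Nil thus ?thesis using p' less.prems by (intro exI[of _ "[a]"]) auto
  next
    case (Cons y rest')
    have e1: "(Inl a, y) \<in> torso_E V E Z" and s1: "successively (\<lambda>x y. (x,y) \<in> torso_E V E Z) (y # rest')"
      using less.prems(1) p' Cons by auto
    show ?thesis
    proof (cases y)
      case (Inl c)
      have lt: "length (y#rest') < length p'" using p' Cons by simp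
      obtain q' where q': "q' \<noteq> []" "successively (\<lambda>x y. (x,y)\<in>E) q'" "hd q' = c" "last q' = b"
        "set q' \<subseteq> {x. Inl x \<in> set (y#rest')} \<union> Z" "even (length q') \<longleftrightarrow> even (length (y#rest'))"
        using less.hyps[OF lt, of c] s1 less.prems(4) p' Cons Inl by auto
      obtain r where r: "r \<noteq> []" "successively (\<lambda>x y. (x,y)\<in>E) r" "hd r = a" "last r = c" "set r \<subseteq> {a,c} \<union> Z" "even (length r)"
        using edge_odd[of a c V E Z] e1 Inl by auto
      note g = glue[OF r(1) q'(1) r(2) q'(2) r(4)[folded q'(3)]]
      have hd: "hd (r @ tl q') = a" using r by simp
      have "set (r @ tl q') \<subseteq> {x. Inl x \<in> set p'} \<union> Z" using g(3) r(5) q'(5) p' Cons Inl by auto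
      moreover have "even (length (r @ tl q')) \<longleftrightarrow> even (length p')" using g(4) r(6) q'(6) p' Cons by auto
      ultimately show ?thesis using g(1,2) hd q'(4) r(1) by (intro exI[of _ "r @ tl q'"]) auto
    next
      case (Inr uv)
      obtain u v where uv: "uv = (u,v)" by force
      have new: "(a,v) \<in> torso_new V E Z" and ua: "u = a" using e1 Inr uv unfolding torso_E_def by auto
      obtain w rest'' where r': "rest' = w # rest''"
        using less.prems(4) p' Cons Inr by (cases rest') auto
      have "(y, w) \<in> torso_E V E Z" using s1 r' by auto
      hence w: "w = Inl v" using Inr uv unfolding torso_E_def by auto
      have s2: "successively (\<lambda>x y. (x,y) \<in> torso_E V E Z) (w # rest'')" using s1 r' by auto
      have lt: "length (w#rest'') < length p'" using p' Cons r' by simp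
      obtain q' where q': "q' \<noteq> []" "successively (\<lambda>x y. (x,y)\<in>E) q'" "hd q' = v" "last q' = b"
        "set q' \<subseteq> {x. Inl x \<in> set (w#rest'')} \<union> Z" "even (length q') \<longleftrightarrow> even (length (w#rest''))"
        using less.hyps[OF lt, of v] s2 less.prems(4) p' Cons r' w by auto
      obtain r where r: "r \<noteq> []" "successively (\<lambda>x y. (x,y)\<in>E) r" "hd r = a" "last r = v" "set r \<subseteq> {a,v} \<union> Z" "odd (length r)"
        using new_even[OF new] by auto
      note g = glue[OF r(1) q'(1) r(2) q'(2) r(4)[folded q'(3)]]
      have hd: "hd (r @ tl q') = a" using r by simp
      have "set (r @ tl q') \<subseteq> {x. Inl x \<in> set p'} \<union> Z" using g(3) r(5) q'(5) p' Cons r' w by auto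
      moreover have "even (length (r @ tl q')) \<longleftrightarrow> even (length p')" using g(4) r(6) q'(6) p' Cons r' by auto
      ultimately show ?thesis using g(1,2) hd q'(4) r(1) by (intro exI[of _ "r @ tl q'"]) auto
    qed
  qed
qed

lemma contract:
  "is_path V E p \<Longrightarrow> hd p \<notin> Z \<Longrightarrow> last p \<notin> Z \<Longrightarrow>
   \<exists>p'. p' \<noteq> [] \<and> distinct p' \<and> successively (\<lambda>x y. (x,y) \<in> torso_E V E Z) p' \<and>
     hd p' = Inl (hd p) \<and> last p' = Inl (last p) \<and>
     set p' \<subseteq> Inl ` (set p - Z) \<union> Inr ` {(u,v). (u,v) \<in> torso_new V E Z \<and> u \<in> set p \<and> v \<in> set p} \<and>
     (even (length p') \<longleftrightarrow> even (length p))"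
proof (induction "length p" arbitrary: p rule: less_induct)
  case less
  obtain a rest where p: "p = a # rest" using less.prems(1) by (cases p) (auto simp: is_path_def)
  show ?case
  proof (cases rest)
    case Nil thus ?thesis using p less.prems by (intro exI[of _ "[Inl a]"]) auto
  next
    case (Cons y0 r0)
    have "last p \<in> set rest" using p Cons by simp
    hence "\<exists>x\<in>set rest. x \<notin> Z" using less.prems(3) by blast
    then obtain zs c rest2 where sp: "rest = zs @ c # rest2" "c \<notin> Z" "\<forall>y\<in>set zs. y \<in> Z"
      using split_list_first_prop[of rest "\<lambda>x. x \<notin> Z"] by blast
    have pp: "p = (a # zs @ [c]) @ rest2" using p sp by simp
    have P: "p \<noteq> []" "distinct p" "set p \<subseteq> V" "successively (\<lambda>x y. (x,y)\<in>E) p"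
      using less.prems(1) unfolding is_path_succ by auto
    have "successively (\<lambda>x y. (x,y)\<in>E) ((a # zs @ [c]) @ rest2)" using P(4) pp by simp
    hence "successively (\<lambda>x y. (x,y)\<in>E) (a # zs @ [c])" unfolding successively_append_iff by blast
    hence segp: "is_path V E (a # zs @ [c])" using P pp unfolding is_path_succ
      by (auto simp del: successively.simps)
    have "successively (\<lambda>x y. (x,y)\<in>E) ((a # zs) @ (c # rest2))" using P(4) pp by simp
    hence "successively (\<lambda>x y. (x,y)\<in>E) (c # rest2)" unfolding successively_append_iff by blast
    hence cp: "is_path V E (c # rest2)" using P p sp unfolding is_path_succ
      by (auto simp del: successively.simps)
    have aZ: "a \<notin> Z" using less.prems(2) p by simp
    have ac: "a \<noteq> c" "a \<notin> set (c # rest2)" using P p sp by auto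
    have aV: "a \<in> V" "c \<in> V" using P p sp by auto
    have lastc: "last (c # rest2) = last p" using p sp by simp
    have lt: "length (c # rest2) < length p" using p sp by simp
    obtain p'' where p'': "p'' \<noteq> []" "distinct p''" "successively (\<lambda>x y. (x,y) \<in> torso_E V E Z) p''"
     "hd p'' = Inl c" "last p'' = Inl (last p)"
     "set p'' \<subseteq> Inl ` (set (c#rest2) - Z) \<union> Inr ` {(u,v). (u,v) \<in> torso_new V E Z \<and> u \<in> set (c#rest2) \<and> v \<in> set (c#rest2)}"
     "even (length p'') \<longleftrightarrow> even (length (c#rest2))"
      using less.hyps[OF lt cp] sp(2) lastc less.prems(3) by auto
    have zp: "Z_path V E Z (odd (length zs + 1)) a c"
      unfolding Z_path_def
      by (rule exI[of _ "a # zs @ [c]"]) (use segp sp(3) in \<open>auto simp: path_len_def\<close>)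
    have sub: "set (c#rest2) \<subseteq> set p" using p sp by auto
    have mono: "Inl ` (set (c#rest2) - Z) \<union> Inr ` {(u,v). (u,v) \<in> torso_new V E Z \<and> u \<in> set (c#rest2) \<and> v \<in> set (c#rest2)}
      \<subseteq> Inl ` (set p - Z) \<union> Inr ` {(u,v). (u,v) \<in> torso_new V E Z \<and> u \<in> set p \<and> v \<in> set p}"
      using sub by (intro Un_mono image_mono) auto
    have p''s: "set p'' \<subseteq> Inl ` (set p - Z) \<union> Inr ` {(u,v). (u,v) \<in> torso_new V E Z \<and> u \<in> set p \<and> v \<in> set p}"
      using p''(6) mono by (rule order_trans)
    have ainl: "Inl a \<in> Inl ` (set p - Z)" using aZ p by auto
    have ninl: "Inl a \<notin> set p''" using p''(6) ac by auto
    show ?thesis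
    proof (cases "even (length zs)")
      case True
      have e: "(Inl a, Inl c) \<in> torso_E V E Z" using zp True aZ sp(2) aV ac unfolding torso_E_def by auto
      show ?thesis
      proof (intro exI[of _ "Inl a # p''"] conjI)
        show "successively (\<lambda>x y. (x,y) \<in> torso_E V E Z) (Inl a # p'')"
          using e p''(1,3,4) by (cases p'') auto
        show "set (Inl a # p'') \<subseteq> Inl ` (set p - Z) \<union> Inr ` {(u,v). (u,v) \<in> torso_new V E Z \<and> u \<in> set p \<and> v \<in> set p}"
          unfolding list.set insert_subset using p''s ainl by (intro conjI) blast+
        show "even (length (Inl a # p'')) \<longleftrightarrow> even (length p)" using p''(7) True p sp by auto
      qed (use p'' ninl p in auto)
    next
      case False
      have n: "(a, c) \<in> torso_new V E Z" using zp False aZ sp(2) aV ac unfolding torso_new_def by auto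
      have e: "(Inl a, Inr (a,c)) \<in> torso_E V E Z" "(Inr (a,c), Inl c) \<in> torso_E V E Z"
        using n unfolding torso_E_def by auto
      have ninr: "Inr (a,c) \<notin> set p''" using p''(6) ac by auto
      show ?thesis
      proof (intro exI[of _ "Inl a # Inr (a,c) # p''"] conjI)
        show "successively (\<lambda>x y. (x,y) \<in> torso_E V E Z) (Inl a # Inr (a,c) # p'')"
          using e p''(1,3,4) by (cases p'') auto
        show "set (Inl a # Inr (a,c) # p'') \<subseteq> Inl ` (set p - Z) \<union> Inr ` {(u,v). (u,v) \<in> torso_new V E Z \<and> u \<in> set p \<and> v \<in> set p}"
          using p''s ainl n p sp by auto
        show "even (length (Inl a # Inr (a,c) # p'')) \<longleftrightarrow> even (length p)" using p''(7) False p sp by auto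
      qed (use p'' ninl ninr p in auto)
    qed
  qed
qed

theorem corollary2p4:
  fixes V :: "'a set" and E :: "('a \<times> 'a) set" and Vinf T Z :: "'a set" and k :: nat
  assumes "dag V E"
    and "Vinf \<subseteq> V" and "T \<subseteq> Vinf"
    and "Z \<subseteq> V - T"
  shows "(\<exists>M. omnc_solution V E Vinf T M \<and> card M \<le> k \<and> M \<inter> Z = {})
     \<longleftrightarrow> (\<exists>M'. omnc_solution (torso_V V E Z) (torso_E V E Z) (torso_Vinf V E Vinf Z) (Inl ` T) M'
                \<and> card M' \<le> k)"
proof
  assume "\<exists>M. omnc_solution V E Vinf T M \<and> card M \<le> k \<and> M \<inter> Z = {}"
  then obtain M where M: "omnc_solution V E Vinf T M" "card M \<le> k" "M \<inter> Z = {}" by blast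
  have MV: "M \<subseteq> V - Vinf" using M(1) unfolding omnc_solution_def by auto
  have "omnc_solution (torso_V V E Z) (torso_E V E Z) (torso_Vinf V E Vinf Z) (Inl ` T) (Inl ` M)"
    unfolding omnc_solution_def
  proof (intro conjI allI impI)
    show "Inl ` M \<subseteq> torso_V V E Z - torso_Vinf V E Vinf Z"
      using MV M(3) unfolding torso_V_def torso_Vinf_def by auto
  next
    fix p' assume op: "odd_T_path (torso_V V E Z) (torso_E V E Z) (Inl ` T) p'"
    show "set p' \<inter> Inl ` M \<noteq> {}"
    proof
      assume dis: "set p' \<inter> Inl ` M = {}"
      have P: "p' \<noteq> []" "set p' \<subseteq> torso_V V E Z" "successively (\<lambda>x y. (x,y) \<in> torso_E V E Z) p'"
        "odd (length p' - 1)" "hd p' \<in> Inl ` T" "last p' \<in> Inl ` T"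
        using op unfolding odd_T_path_def is_path_succ path_len_def by auto
      obtain a b where ab: "hd p' = Inl a" "last p' = Inl b" "a \<in> T" "b \<in> T" using P(5,6) by auto
      obtain q where q: "q \<noteq> []" "successively (\<lambda>x y. (x,y)\<in>E) q" "hd q = a" "last q = b"
       "set q \<subseteq> {x. Inl x \<in> set p'} \<union> Z" "even (length q) \<longleftrightarrow> even (length p')"
        using expand[OF P(3,1) ab(1,2)] by blast
      have dq: "distinct q" using acyclic_distinct[OF _ q(2)] assms(1) unfolding dag_def by auto
      have "{x. Inl x \<in> set p'} \<subseteq> V" using P(2) unfolding torso_V_def by auto
      hence qV: "set q \<subseteq> V" using q(5) assms(4) by auto
      have "odd (length q - 1)" using q(1,6) P(1,4) by (cases q; cases p') auto
      hence "odd_T_path V E T q" unfolding odd_T_path_def is_path_succ path_len_def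
        using q dq qV ab by auto
      then obtain m where m: "m \<in> set q" "m \<in> M" using M(1) unfolding omnc_solution_def by blast
      have "m \<notin> Z" using m M(3) by auto
      hence "Inl m \<in> set p'" using q(5) m by auto
      thus False using dis m by auto
    qed
  qed
  moreover have "card (Inl ` M) \<le> k" using M(2) by (simp add: card_image)
  ultimately show "\<exists>M'. omnc_solution (torso_V V E Z) (torso_E V E Z) (torso_Vinf V E Vinf Z) (Inl ` T) M'
                \<and> card M' \<le> k" by blast
next
  assume "\<exists>M'. omnc_solution (torso_V V E Z) (torso_E V E Z) (torso_Vinf V E Vinf Z) (Inl ` T) M'
                \<and> card M' \<le> k"
  then obtain M' where M': "omnc_solution (torso_V V E Z) (torso_E V E Z) (torso_Vinf V E Vinf Z) (Inl ` T) M'"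
    "card M' \<le> k" by blast
  have M'sub: "M' \<subseteq> torso_V V E Z - torso_Vinf V E Vinf Z" using M'(1) unfolding omnc_solution_def by auto
  have M'Inl: "M' \<subseteq> Inl ` (V - Z - Vinf)"
  proof
    fix x assume "x \<in> M'"
    hence x: "x \<in> torso_V V E Z" "x \<notin> torso_Vinf V E Vinf Z" using M'sub by auto
    then obtain v where v: "x = Inl v" "v \<in> V - Z" unfolding torso_V_def torso_Vinf_def by auto
    hence "v \<notin> Vinf" using x(2) unfolding torso_Vinf_def by auto
    thus "x \<in> Inl ` (V - Z - Vinf)" using v by auto
  qed
  define M where "M = Inl -` M'"
  have img: "Inl ` M = M'" using M'Inl unfolding M_def by auto
  have MV: "M \<subseteq> V - Vinf" "M \<inter> Z = {}" using M'Inl unfolding M_def by auto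
  have "card M' = card M" unfolding img[symmetric] by (rule card_image) (simp add: inj_on_def)
  hence cardM: "card M \<le> k" using M'(2) by simp
  have "omnc_solution V E Vinf T M"
    unfolding omnc_solution_def
  proof (intro conjI allI impI)
    show "M \<subseteq> V - Vinf" using MV by simp
  next
    fix p assume op: "odd_T_path V E T p"
    have ip: "is_path V E p" and hT: "hd p \<in> T" "last p \<in> T" and od: "odd (path_len p)"
      using op unfolding odd_T_path_def by auto
    have hZ: "hd p \<notin> Z" "last p \<notin> Z" using hT assms(4) by auto
    obtain p' where p': "p' \<noteq> []" "distinct p'" "successively (\<lambda>x y. (x,y) \<in> torso_E V E Z) p'"
     "hd p' = Inl (hd p)" "last p' = Inl (last p)"
     "set p' \<subseteq> Inl ` (set p - Z) \<union> Inr ` {(u,v). (u,v) \<in> torso_new V E Z \<and> u \<in> set p \<and> v \<in> set p}"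
     "even (length p') \<longleftrightarrow> even (length p)"
      using contract[OF ip hZ] by blast
    have pV: "set p \<subseteq> V" "p \<noteq> []" using ip unfolding is_path_def by auto
    have "Inl ` (set p - Z) \<union> Inr ` {(u,v). (u,v) \<in> torso_new V E Z \<and> u \<in> set p \<and> v \<in> set p}
       \<subseteq> torso_V V E Z" unfolding torso_V_def using pV by (intro Un_mono image_mono) auto
    hence "set p' \<subseteq> torso_V V E Z" using p'(6) by (rule order_trans[rotated])
    moreover have "odd (path_len p')" using od p'(1,7) pV(2) unfolding path_len_def
      by (cases p; cases p') auto
    ultimately have "odd_T_path (torso_V V E Z) (torso_E V E Z) (Inl ` T) p'"
      unfolding odd_T_path_def is_path_succ using p' hT by auto
    then obtain x where x: "x \<in> set p'" "x \<in> M'" using M'(1) unfolding omnc_solution_def by blast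
    then obtain v where v: "x = Inl v" "v \<in> M" using img by auto
    have "v \<in> set p" using x(1) p'(6) v(1) by auto
    thus "set p \<inter> M \<noteq> {}" using v by auto
  qed
  thus "\<exists>M. omnc_solution V E Vinf T M \<and> card M \<le> k \<and> M \<inter> Z = {}" using cardM MV by blast
qed

end
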